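(* Let $n\ge 3$ and $m\ge 2$ be integers, $C_n$ the cycle on $n$ vertices and $P_m$ the path on $m$ vertices. Then $AT(C_n+_S P_m)=3$.
   Context: For an orientation $D$, a subdigraph is Eulerian if every vertex has equal in- and outdegree in it; $D$ is an AT-orientation if the numbers of Eulerian subgraphs with an even and with an odd number of arcs differ; $AT(G)$ is the smallest $k$ such that $G$ has an AT-orientation of maximum outdegree at most $k-1$. $S(G)$ is obtained from $G$ by subdividing each edge once, with vertex set identified with $V(G)\cup E(G)$. $G+_S H$ has vertex set $(V(G)\cup E(G))\times V(H)$, with $(u_1,u_2)\sim(v_1,v_2)$ iff [$u_1=v_1\in V(G)$ and $u_2v_2\in E(H)$] or [$u_2=v_2$ and $u_1v_1\in E(S(G))$]. *)

theory Defs
  imports Main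
begin

type_synonym 'a sgraph = "'a set \<times> 'a set set"

definition verts :: "'a sgraph \<Rightarrow> 'a set" where "verts G = fst G"
definition edges :: "'a sgraph \<Rightarrow> 'a set set" where "edges G = snd G"

definition cycle_graph :: "nat \<Rightarrow> nat sgraph" where
  "cycle_graph n = ({0..<n}, {{i, (i + 1) mod n} | i. i < n})"

definition path_graph :: "nat \<Rightarrow> nat sgraph" where
  "path_graph m = ({0..<m}, {{i, i + 1} | i. i + 1 < m})"

text \<open>Subdivision S(G): vertex set V(G) \<union> E(G) (as a disjoint sum), each edge
  e = uv replaced by the two edges u--e and e--v.\<close>
definition subdivision :: "'a sgraph \<Rightarrow> ('a + 'a set) sgraph" where
  "subdivision G = (Inl ` verts G \<union> Inr ` edges G,
                    {{Inl u, Inr e} | u e. e \<in> edges G \<and> u \<in> e})"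

definition splus :: "'a sgraph \<Rightarrow> 'b sgraph \<Rightarrow> (('a + 'a set) \<times> 'b) sgraph" where
  "splus G H = (verts (subdivision G) \<times> verts H,
     {{(u1, u2), (v1, v2)} | u1 u2 v1 v2.
        (u1 \<in> verts (subdivision G) \<and> v1 \<in> verts (subdivision G) \<and>
         u2 \<in> verts H \<and> v2 \<in> verts H) \<and>
        ((u1 = v1 \<and> u1 \<in> Inl ` verts G \<and> {u2, v2} \<in> edges H) \<or>
         (u2 = v2 \<and> {u1, v1} \<in> edges (subdivision G)))})"

definition is_orientation :: "'a sgraph \<Rightarrow> ('a \<times> 'a) set \<Rightarrow> bool" where
  "is_orientation G D \<longleftrightarrow>
     (\<forall>(u, v) \<in> D. {u, v} \<in> edges G) \<and>
     (\<forall>e \<in> edges G. \<exists>!a. a \<in> D \<and> {fst a, snd a} = e)"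

definition outdeg :: "('a \<times> 'a) set \<Rightarrow> 'a \<Rightarrow> nat" where
  "outdeg A v = card {w. (v, w) \<in> A}"

definition indeg :: "('a \<times> 'a) set \<Rightarrow> 'a \<Rightarrow> nat" where
  "indeg A v = card {w. (w, v) \<in> A}"

text \<open>Eulerian (spanning) subdigraphs of D, identified with their arc sets.\<close>
definition eulerian_sub :: "('a \<times> 'a) set \<Rightarrow> ('a \<times> 'a) set \<Rightarrow> bool" where
  "eulerian_sub D A \<longleftrightarrow> A \<subseteq> D \<and> (\<forall>v. indeg A v = outdeg A v)"

definition EE :: "('a \<times> 'a) set \<Rightarrow> nat" where
  "EE D = card {A. eulerian_sub D A \<and> even (card A)}"

definition EO :: "('a \<times> 'a) set \<Rightarrow> nat" where
  "EO D = card {A. eulerian_sub D A \<and> odd (card A)}"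

definition AT_orientation :: "('a \<times> 'a) set \<Rightarrow> bool" where
  "AT_orientation D \<longleftrightarrow> EE D \<noteq> EO D"

text \<open>AT(G): least k such that G has an AT-orientation with maximum outdegree at most k-1
  (i.e. every outdegree is < k).\<close>
definition AT :: "'a sgraph \<Rightarrow> nat" where
  "AT G = (LEAST k. \<exists>D. is_orientation G D \<and> AT_orientation D \<and>
                         (\<forall>v \<in> verts G. outdeg D v < k))"

end

theory Submission
  imports Defs
begin

definition cE :: "nat \<Rightarrow> nat \<Rightarrow> nat set" where "cE n i = {i, (i+1) mod n}"

lemma verts_cyc: "verts (cycle_graph n) = {0..<n}"
  by (simp add: verts_def cycle_graph_def)

lemma edges_cyc: "edges (cycle_graph n) = cE n ` {..<n}"
  by (auto simp: edges_def cycle_graph_def cE_def)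

lemma verts_path: "verts (path_graph m) = {0..<m}"
  by (simp add: verts_def path_graph_def)

lemma edges_path: "edges (path_graph m) = {{i, i + 1} | i. i + 1 < m}"
  by (simp add: edges_def path_graph_def)

lemma cE_sub: "e \<in> edges (cycle_graph n) \<Longrightarrow> u \<in> e \<Longrightarrow> u < n"
  by (auto simp: edges_cyc cE_def)

lemma verts_G: "verts (splus (cycle_graph n) (path_graph m)) =
   (Inl ` {0..<n} \<union> Inr ` edges (cycle_graph n)) \<times> {0..<m}"
  by (simp add: splus_def verts_def subdivision_def path_graph_def cycle_graph_def)

lemma edges_sub: "edges (subdivision G) = {{Inl u, Inr e} | u e. e \<in> edges G \<and> u \<in> e}"
  by (simp add: edges_def subdivision_def)

lemma verts_sub: "verts (subdivision G) = Inl ` verts G \<union> Inr ` edges G"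
  by (simp add: verts_def subdivision_def)

lemma edges_G: "x \<in> edges (splus (cycle_graph n) (path_graph m)) \<longleftrightarrow>
   (\<exists>i j. i < n \<and> j + 1 < m \<and> x = {(Inl i, j), (Inl i, j + 1)}) \<or>
   (\<exists>e u j. e \<in> edges (cycle_graph n) \<and> u \<in> e \<and> j < m \<and> x = {(Inl u, j), (Inr e, j)})"
proof
  assume "x \<in> edges (splus (cycle_graph n) (path_graph m))"
  then obtain u1 u2 v1 v2 where x: "x = {(u1, u2), (v1, v2)}"
    and V: "u1 \<in> verts (subdivision (cycle_graph n))" "v1 \<in> verts (subdivision (cycle_graph n))"
       "u2 < m" "v2 < m"
    and c: "(u1 = v1 \<and> u1 \<in> Inl ` {0..<n} \<and> {u2, v2} \<in> edges (path_graph m)) \<or>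
         (u2 = v2 \<and> {u1, v1} \<in> edges (subdivision (cycle_graph n)))"
    unfolding splus_def edges_def[of "(_, _)"] by (auto simp: verts_path verts_cyc)
  from c show "(\<exists>i j. i < n \<and> j + 1 < m \<and> x = {(Inl i, j), (Inl i, j + 1)}) \<or>
   (\<exists>e u j. e \<in> edges (cycle_graph n) \<and> u \<in> e \<and> j < m \<and> x = {(Inl u, j), (Inr e, j)})"
  proof
    assume h: "u1 = v1 \<and> u1 \<in> Inl ` {0..<n} \<and> {u2, v2} \<in> edges (path_graph m)"
    then obtain i k where "u1 = Inl i" "i < n" "{u2, v2} = {k, k+1}" "k + 1 < m"
      by (auto simp: edges_path)
    then show ?thesis using x h by (auto simp: doubleton_eq_iff insert_commute)
  next
    assume h: "u2 = v2 \<and> {u1, v1} \<in> edges (subdivision (cycle_graph n))"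
    then obtain u e where "{u1, v1} = {Inl u, Inr e}" "e \<in> edges (cycle_graph n)" "u \<in> e"
      by (auto simp: edges_sub)
    then show ?thesis using x h V by (auto simp: doubleton_eq_iff insert_commute)
  qed
next
  assume "(\<exists>i j. i < n \<and> j + 1 < m \<and> x = {(Inl i, j), (Inl i, j + 1)}) \<or>
   (\<exists>e u j. e \<in> edges (cycle_graph n) \<and> u \<in> e \<and> j < m \<and> x = {(Inl u, j), (Inr e, j)})"
  then show "x \<in> edges (splus (cycle_graph n) (path_graph m))"
  proof
    assume "\<exists>i j. i < n \<and> j + 1 < m \<and> x = {(Inl i, j), (Inl i, j + 1)}"
    then obtain i j where h: "i < n" "j + 1 < m" "x = {(Inl i, j), (Inl i, j + 1)}" by blast
    show ?thesis unfolding splus_def edges_def[of "(_, _)"] snd_conv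
      apply (rule CollectI)
      apply (rule exI[of _ "Inl i"], rule exI[of _ j], rule exI[of _ "Inl i"], rule exI[of _ "j+1"])
      using h by (auto simp: verts_sub verts_path verts_cyc edges_path)
  next
    assume "\<exists>e u j. e \<in> edges (cycle_graph n) \<and> u \<in> e \<and> j < m \<and> x = {(Inl u, j), (Inr e, j)}"
    then obtain e u j where h: "e \<in> edges (cycle_graph n)" "u \<in> e" "j < m" "x = {(Inl u, j), (Inr e, j)}" by blast
    show ?thesis unfolding splus_def edges_def[of "(_, _)"] snd_conv
      apply (rule CollectI)
      apply (rule exI[of _ "Inl u"], rule exI[of _ j], rule exI[of _ "Inr e"], rule exI[of _ "j"])
      using h cE_sub[OF h(1,2)] by (auto simp: verts_sub verts_path verts_cyc edges_sub)
  qed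
qed


definition D0 :: "nat \<Rightarrow> nat \<Rightarrow> (((nat + nat set) \<times> nat) \<times> ((nat + nat set) \<times> nat)) set" where
  "D0 n m = {((Inr e, j), (Inl u, j)) | e u j. e \<in> edges (cycle_graph n) \<and> u \<in> e \<and> j < m}
          \<union> {((Inl i, j), (Inl i, Suc j)) | i j. i < n \<and> Suc j < m}"

definition pot :: "(nat + nat set) \<times> nat \<Rightarrow> nat" where
  "pot v = (case fst v of Inl _ \<Rightarrow> snd v + 1 | Inr _ \<Rightarrow> 0)"

lemma pot_lt: "a \<in> D0 n m \<Longrightarrow> pot (fst a) < pot (snd a)"
  by (auto simp: D0_def pot_def)

lemma D0_fin: "finite (D0 n m)"
proof -
  have "D0 n m \<subseteq> ((Inl ` {0..<n} \<union> Inr ` edges (cycle_graph n)) \<times> {0..<m}) \<times>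
                 ((Inl ` {0..<n} \<union> Inr ` edges (cycle_graph n)) \<times> {0..<m})"
    by (auto simp: D0_def dest: cE_sub)
  moreover have "finite (edges (cycle_graph n))" by (simp add: edges_cyc)
  ultimately show ?thesis by (meson finite_SigmaI finite_Un finite_atLeastLessThan finite_imageI finite_subset)
qed

lemma eulerian_empty:
  assumes fin: "finite D" and pl: "\<And>a. a \<in> D \<Longrightarrow> (\<phi>::'a \<Rightarrow> nat) (fst a) < \<phi> (snd a)"
    and eu: "eulerian_sub D A"
  shows "A = {}"
proof (rule ccontr)
  assume ne: "A \<noteq> {}"
  have AD: "A \<subseteq> D" and deg: "\<And>v. indeg A v = outdeg A v" using eu by (auto simp: eulerian_sub_def)
  have finA: "finite A" using AD fin finite_subset by blast
  define M where "M = Max ((\<phi> \<circ> snd) ` A)"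
  have "M \<in> (\<phi> \<circ> snd) ` A" unfolding M_def using finA ne by simp
  then obtain a where aA: "a \<in> A" and aM: "\<phi> (snd a) = M" by auto
  have Mmax: "\<And>b. b \<in> A \<Longrightarrow> \<phi> (snd b) \<le> M" unfolding M_def using finA by auto
  let ?v = "snd a"
  have "{w. (w, ?v) \<in> A} \<subseteq> fst ` A" by force
  hence fin1: "finite {w. (w, ?v) \<in> A}" using finA finite_subset by blast
  have "(fst a, ?v) \<in> A" using aA by simp
  hence "{w. (w, ?v) \<in> A} \<noteq> {}" by blast
  hence "indeg A ?v \<noteq> 0" unfolding indeg_def using fin1 by simp
  hence "outdeg A ?v \<noteq> 0" using deg by simp
  hence "{w. (?v, w) \<in> A} \<noteq> {}" unfolding outdeg_def by (metis card.empty)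
  then obtain w where wA: "(?v, w) \<in> A" by auto
  have "\<phi> ?v < \<phi> w" using pl[of "(?v, w)"] wA AD by auto
  moreover have "\<phi> w \<le> M" using Mmax[OF wA] by simp
  ultimately show False using aM by simp
qed

lemma AT_orient_acyclic:
  assumes fin: "finite D" and pl: "\<And>a. a \<in> D \<Longrightarrow> (\<phi>::'a \<Rightarrow> nat) (fst a) < \<phi> (snd a)"
  shows "AT_orientation D"
proof -
  have e: "eulerian_sub D {}" by (simp add: eulerian_sub_def indeg_def outdeg_def)
  have s1: "{A. eulerian_sub D A \<and> even (card A)} = {{}}"
  proof (intro equalityI subsetI)
    fix x assume "x \<in> {A. eulerian_sub D A \<and> even (card A)}"
    then have "x = {}" using eulerian_empty[OF fin pl] by blast
    then show "x \<in> {{}}" by simp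
  qed (use e in simp)
  have s2: "{A. eulerian_sub D A \<and> odd (card A)} = {}"
  proof (intro equalityI subsetI)
    fix x assume "x \<in> {A. eulerian_sub D A \<and> odd (card A)}"
    then have "x = {}" and "odd (card x)" using eulerian_empty[OF fin pl] by blast+
    then show "x \<in> {}" by simp
  qed simp
  have "EE D = 1" "EO D = 0" unfolding EE_def EO_def s1 s2 by simp_all
  then show ?thesis by (simp add: AT_orientation_def)
qed

lemma D0_orient: "is_orientation (splus (cycle_graph n) (path_graph m)) (D0 n m)"
  unfolding is_orientation_def
proof (intro conjI ballI)
  fix x assume "x \<in> D0 n m"
  then consider (a) e u j where "x = ((Inr e, j), (Inl u, j))" "e \<in> edges (cycle_graph n)" "u \<in> e" "j < m"
    | (b) i j where "x = ((Inl i, j), (Inl i, Suc j))" "i < n" "Suc j < m"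
    unfolding D0_def by blast
  then show "case x of (u, v) \<Rightarrow> {u, v} \<in> edges (splus (cycle_graph n) (path_graph m))"
  proof cases
    case a
    have "{(Inr e, j), (Inl u, j)} = {(Inl u, j), (Inr e, j)}" by (rule insert_commute)
    then show ?thesis unfolding edges_G using a by blast
  next
    case b
    then show ?thesis unfolding edges_G by auto
  qed
next
  fix x assume x: "x \<in> edges (splus (cycle_graph n) (path_graph m))"
  have ex: "\<exists>a. a \<in> D0 n m \<and> {fst a, snd a} = x"
    using x unfolding edges_G
  proof
    assume "\<exists>i j. i < n \<and> j + 1 < m \<and> x = {(Inl i, j), (Inl i, j + 1)}"
    then obtain i j where h: "i < n" "j + 1 < m" "x = {(Inl i, j), (Inl i, j + 1)}" by blast
    show ?thesis by (rule exI[of _ "((Inl i, j), (Inl i, Suc j))"]) (use h in \<open>auto simp: D0_def\<close>)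
  next
    assume "\<exists>e u j. e \<in> edges (cycle_graph n) \<and> u \<in> e \<and> j < m \<and> x = {(Inl u, j), (Inr e, j)}"
    then obtain e u j where h: "e \<in> edges (cycle_graph n)" "u \<in> e" "j < m" "x = {(Inl u, j), (Inr e, j)}" by blast
    show ?thesis by (rule exI[of _ "((Inr e, j), (Inl u, j))"]) (use h in \<open>auto simp: D0_def insert_commute\<close>)
  qed
  show "\<exists>!a. a \<in> D0 n m \<and> {fst a, snd a} = x"
  proof (rule ex_ex1I[OF ex])
    fix a b assume a: "a \<in> D0 n m \<and> {fst a, snd a} = x" and b: "b \<in> D0 n m \<and> {fst b, snd b} = x"
    have pa: "pot (fst a) < pot (snd a)" and pb: "pot (fst b) < pot (snd b)" using a b pot_lt[of a n m] pot_lt[of b n m] by blast+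
    have "{fst a, snd a} = {fst b, snd b}" using a b by simp
    hence "(fst a = fst b \<and> snd a = snd b) \<or> (fst a = snd b \<and> snd a = fst b)" by (simp add: doubleton_eq_iff)
    then show "a = b" using pa pb by (metis less_asym prod_eq_iff)
  qed
qed

lemma D0_outdeg:
  assumes "v \<in> verts (splus (cycle_graph n) (path_graph m))"
  shows "outdeg (D0 n m) v < 3"
proof -
  obtain x j where v: "v = (x, j)" by force
  show ?thesis
  proof (cases x)
    case (Inl i)
    have s1: "{w. (v, w) \<in> D0 n m} \<subseteq> {(Inl i, Suc j)}" by (auto simp: D0_def v Inl)
    have "card {w. (v, w) \<in> D0 n m} \<le> card {(Inl i, Suc j) :: (nat + nat set) \<times> nat}" using card_mono[OF _ s1] by simp
    hence "card {w. (v, w) \<in> D0 n m} \<le> 1" by simp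
    then show ?thesis by (simp add: outdeg_def)
  next
    case (Inr e)
    have sub: "{w. (v, w) \<in> D0 n m} \<subseteq> (\<lambda>u. (Inl u, j)) ` e" by (auto simp: D0_def v Inr)
    have "e \<in> edges (cycle_graph n)" using assms unfolding verts_G v Inr by blast
    then obtain i where "e = {i, (i+1) mod n}" unfolding edges_cyc cE_def by blast
    hence fe: "finite e" and ce: "card e \<le> 2" by (simp_all add: card_insert_if)
    have "card {w. (v, w) \<in> D0 n m} \<le> card ((\<lambda>u. (Inl u, j) :: (nat + nat set) \<times> nat) ` e)"
      using sub by (intro card_mono finite_imageI fe)
    also have "\<dots> \<le> card e" by (rule card_image_le[OF fe])
    finally have "card {w. (v, w) \<in> D0 n m} \<le> 2" using ce by linarith
    then show ?thesis by (simp add: outdeg_def)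
  qed
qed

lemma upper: "\<exists>D. is_orientation (splus (cycle_graph n) (path_graph m)) D \<and> AT_orientation D \<and>
   (\<forall>v \<in> verts (splus (cycle_graph n) (path_graph m)). outdeg D v < 3)"
  using D0_orient[of n m] AT_orient_acyclic[OF D0_fin[of n m] pot_lt[of _ n m]] D0_outdeg[of _ n m] by blast


lemma arith3:
  assumes "(i::nat) < n" "i' < n" "3 \<le> n" "i = (i'+1) mod n" "i' = (i+1) mod n"
  shows False
proof (cases "i' + 1 < n")
  case True
  have i: "i = i' + 1" using assms(4) True by (simp only: mod_less)
  show False
  proof (cases "i' + 2 < n")
    case True
    have "(i + 1) mod n = i' + 2" using True i by simp
    then show False using assms(5) by linarith
  next
    case False
    then have "i + 1 = n" using \<open>i' + 1 < n\<close> i by linarith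
    then have "(i + 1) mod n = 0" by simp
    then have "i' = 0" using assms(5) by linarith
    then show False using \<open>i + 1 = n\<close> i assms(3) by linarith
  qed
next
  case False
  then have e: "i' + 1 = n" using assms(2) by linarith
  then have "(i' + 1) mod n = 0" by simp
  then have "i = 0" using assms(4) by linarith
  then have "(i + 1) mod n = 1" using assms(3) by simp
  then have "i' = 1" using assms(5) by linarith
  then show False using e assms(3) by linarith
qed

lemma cE_inj: assumes "3 \<le> n" "i < n" "i' < n" "cE n i = cE n i'" shows "i = i'"
proof (rule ccontr)
  assume ne: "i \<noteq> i'"
  have "{i, (i+1) mod n} = {i', (i'+1) mod n}" using assms(4) by (simp add: cE_def)
  then have "i = (i'+1) mod n" "i' = (i+1) mod n" using ne by (auto simp: doubleton_eq_iff)
  then show False using arith3 assms by blast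
qed

lemma suc_mod_ne: assumes "(i::nat) < n" "2 \<le> n" shows "(i + 1) mod n \<noteq> i"
proof (cases "i + 1 < n")
  case True
  then show ?thesis by simp
next
  case False
  then have "i + 1 = n" using assms by linarith
  then have "(i + 1) mod n = 0" by simp
  then show ?thesis using \<open>i + 1 = n\<close> assms by linarith
qed

lemma pair_eq: "({(Inl p, j), (Inr q, j)} = {(Inl p', j'), (Inr q', j')}) \<longleftrightarrow> p = p' \<and> q = q' \<and> j = j'"
  by (auto simp: doubleton_eq_iff)

definition gmap :: "nat \<Rightarrow> nat \<times> nat \<times> bool \<Rightarrow> ((nat + nat set) \<times> nat) set" where
  "gmap n x = (case x of (i, j, b) \<Rightarrow>
     {(Inl (if b then (i+1) mod n else i), j), (Inr (cE n i), j)})"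

definition hmap :: "nat \<Rightarrow> nat \<times> nat \<times> bool \<Rightarrow> (nat + nat set) \<times> nat" where
  "hmap n x = (case x of (i, j, b) \<Rightarrow> (if b then Inr (cE n i) else Inl i, j))"

lemma card_V_lt_E:
  assumes n: "3 \<le> n" and m: "2 \<le> m"
  shows "card (verts (splus (cycle_graph n) (path_graph m))) < card (edges (splus (cycle_graph n) (path_graph m)))"
    and "finite (edges (splus (cycle_graph n) (path_graph m)))"
proof -
  let ?V = "verts (splus (cycle_graph n) (path_graph m))"
  let ?E = "edges (splus (cycle_graph n) (path_graph m))"
  define dom where "dom = {0..<n} \<times> {0..<m} \<times> (UNIV :: bool set)"
  have fdom: "finite dom" unfolding dom_def by simp
  have V: "?V = hmap n ` dom"
  proof (intro equalityI subsetI)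
    fix v assume "v \<in> ?V"
    then obtain x j where v: "v = (x, j)" "x \<in> Inl ` {0..<n} \<union> Inr ` edges (cycle_graph n)" "j < m"
      unfolding verts_G by auto
    from v(2) show "v \<in> hmap n ` dom"
    proof
      assume "x \<in> Inl ` {0..<n}"
      then obtain i where "x = Inl i" "i < n" by auto
      then have "v = hmap n (i, j, False)" "(i, j, False) \<in> dom" using v by (auto simp: hmap_def dom_def)
      then show ?thesis by blast
    next
      assume "x \<in> Inr ` edges (cycle_graph n)"
      then obtain i where "x = Inr (cE n i)" "i < n" by (auto simp: edges_cyc)
      then have "v = hmap n (i, j, True)" "(i, j, True) \<in> dom" using v by (auto simp: hmap_def dom_def)
      then show ?thesis by blast
    qed
  next
    fix v assume "v \<in> hmap n ` dom"
    then obtain i j b where "v = hmap n (i, j, b)" "i < n" "j < m" unfolding dom_def by auto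
    then show "v \<in> ?V" unfolding verts_G by (auto simp: hmap_def edges_cyc)
  qed
  have finV: "finite ?V" unfolding V using fdom by simp
  have Esub: "\<And>x. x \<in> ?E \<Longrightarrow> x \<subseteq> ?V"
    unfolding edges_G verts_G by (auto dest: cE_sub)
  have finE: "finite ?E"
  proof -
    have "?E \<subseteq> Pow ?V"
    proof
      fix x assume "x \<in> ?E"
      from Esub[OF this] show "x \<in> Pow ?V" by (rule PowI)
    qed
    moreover have "finite (Pow ?V)" using finV by simp
    ultimately show ?thesis by (rule finite_subset)
  qed
  then show "finite ?E" .
  have cV: "card ?V \<le> card dom" unfolding V by (rule card_image_le[OF fdom])
  have ginj: "inj_on (gmap n) dom"
  proof (rule inj_onI)
    fix a b assume a: "a \<in> dom" and b: "b \<in> dom" and g: "gmap n a = gmap n b"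
    obtain i j p where av: "a = (i, j, p)" by (cases a) auto
    obtain i' j' p' where bv: "b = (i', j', p')" by (cases b) auto
    have ii: "i < n" "i' < n" using a b av bv unfolding dom_def by auto
    from g have eqs: "(if p then (i+1) mod n else i) = (if p' then (i'+1) mod n else i')"
       "cE n i = cE n i'" "j = j'" unfolding av bv gmap_def by (simp_all only: prod.case pair_eq)
    have "i = i'" using cE_inj[OF n ii eqs(2)] .
    moreover have "p = p'"
      using eqs(1) suc_mod_ne[OF ii(1)] n \<open>i = i'\<close> by (cases p; cases p') auto
    ultimately show "a = b" using av bv eqs(3) by simp
  qed
  have gsub: "gmap n ` dom \<subseteq> ?E"
  proof
    fix x assume "x \<in> gmap n ` dom"
    then obtain i j b where x: "x = gmap n (i, j, b)" "i < n" "j < m" unfolding dom_def by auto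
    have ce: "cE n i \<in> edges (cycle_graph n)" using x(2) by (simp add: edges_cyc)
    show "x \<in> ?E" unfolding edges_G
      by (rule disjI2, rule exI[of _ "cE n i"], rule exI[of _ "if b then (i+1) mod n else i"], rule exI[of _ j])
         (use x ce in \<open>auto simp: gmap_def cE_def\<close>)
  qed
  define x0 :: "((nat + nat set) \<times> nat) set" where "x0 = {(Inl 0, 0), (Inl 0, 1)}"
  have x0E: "x0 \<in> ?E" unfolding edges_G x0_def using n m
    by (intro disjI1 exI[of _ 0] exI[of _ 0]) simp
  have x0n: "x0 \<notin> gmap n ` dom" unfolding x0_def gmap_def by auto
  have "card (insert x0 (gmap n ` dom)) \<le> card ?E"
    using x0E gsub finE by (intro card_mono) auto
  moreover have "card (insert x0 (gmap n ` dom)) = card dom + 1"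
    using x0n fdom card_image[OF ginj] by simp
  ultimately show "card ?V < card ?E" using cV by linarith
qed

lemma lower:
  assumes n: "3 \<le> n" and m: "2 \<le> m"
    and D: "is_orientation (splus (cycle_graph n) (path_graph m)) D"
    and k: "\<forall>v \<in> verts (splus (cycle_graph n) (path_graph m)). outdeg D v < k" and k3: "k < 3"
  shows False
proof -
  let ?V = "verts (splus (cycle_graph n) (path_graph m))"
  let ?E = "edges (splus (cycle_graph n) (path_graph m))"
  have Esub: "\<And>x. x \<in> ?E \<Longrightarrow> x \<subseteq> ?V"
    unfolding edges_G verts_G by (auto dest: cE_sub)
  have finV: "finite ?V" unfolding verts_G by (simp add: edges_cyc)
  have D1': "\<forall>(u, w) \<in> D. {u, w} \<in> ?E" using D unfolding is_orientation_def by (rule conjunct1)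
  have D2: "\<forall>e \<in> ?E. \<exists>!a. a \<in> D \<and> {fst a, snd a} = e" using D unfolding is_orientation_def by (rule conjunct2)
  have D1: "{fst a, snd a} \<in> ?E" if "a \<in> D" for a
  proof -
    have "case a of (u, w) \<Rightarrow> {u, w} \<in> ?E" using D1' that by (rule bspec)
    then show ?thesis by (simp add: case_prod_beta)
  qed
  have DV: "D \<subseteq> ?V \<times> ?V"
  proof
    fix a assume "a \<in> D"
    then have "{fst a, snd a} \<subseteq> ?V" using Esub D1 by blast
    then show "a \<in> ?V \<times> ?V" by (simp only: mem_Times_iff insert_subset)
  qed
  have finD: "finite D" using DV finV finite_subset by blast
  have inj: "inj_on fst D"
  proof (rule inj_onI, rule ccontr)
    fix a b assume a: "a \<in> D" and b: "b \<in> D" and f: "fst a = fst b" and ne: "a \<noteq> b"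
    have sn: "snd a \<noteq> snd b" using ne f by (simp add: prod_eq_iff)
    have "(fst a, snd a) \<in> D" using a by simp
    moreover have "(fst a, snd b) \<in> D" using b f by simp
    ultimately have sub: "{snd a, snd b} \<subseteq> {w. (fst a, w) \<in> D}" by blast
    have fin: "finite {w. (fst a, w) \<in> D}"
    proof -
      have "{w. (fst a, w) \<in> D} \<subseteq> snd ` D" by force
      then show ?thesis using finD finite_subset by blast
    qed
    have "2 \<le> card {w. (fst a, w) \<in> D}"
      using card_mono[OF fin sub] sn by simp
    moreover have "a \<in> ?V \<times> ?V" using DV a by (rule subsetD)
    then have "fst a \<in> ?V" by (simp only: mem_Times_iff)
    then have "outdeg D (fst a) < k" using k by (rule bspec[rotated])
    ultimately show False using k3 unfolding outdeg_def by linarith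
  qed
  have "card D \<le> card ?V"
  proof -
    have "card D = card (fst ` D)" using card_image[OF inj] by simp
    also have "\<dots> \<le> card ?V"
    proof (rule card_mono[OF finV])
      show "fst ` D \<subseteq> ?V"
      proof
        fix x assume "x \<in> fst ` D"
        then obtain a where a: "a \<in> D" "x = fst a" by blast
        have "a \<in> ?V \<times> ?V" using DV a(1) by (rule subsetD)
        then show "x \<in> ?V" using a(2) by (simp only: mem_Times_iff)
      qed
    qed
    finally show ?thesis .
  qed
  moreover have "card ?E \<le> card D"
  proof -
    have "?E \<subseteq> (\<lambda>a. {fst a, snd a}) ` D"
    proof
      fix x assume "x \<in> ?E"
      then have "\<exists>!a. a \<in> D \<and> {fst a, snd a} = x" using D2 by (rule bspec[rotated])
      then obtain a where "a \<in> D" "{fst a, snd a} = x" by (rule ex1E) blast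
      then show "x \<in> (\<lambda>a. {fst a, snd a}) ` D" by blast
    qed
    then have "card ?E \<le> card ((\<lambda>a. {fst a, snd a}) ` D)" by (rule card_mono[OF finite_imageI[OF finD]])
    also have "\<dots> \<le> card D" by (rule card_image_le[OF finD])
    finally show ?thesis .
  qed
  ultimately show False using card_V_lt_E[OF n m] by linarith
qed

theorem corollary3p4:
  fixes n m :: nat
  assumes "n \<ge> 3" and "m \<ge> 2"
  shows "AT (splus (cycle_graph n) (path_graph m)) = 3"
  unfolding AT_def
proof (rule Least_equality)
  show "\<exists>D. is_orientation (splus (cycle_graph n) (path_graph m)) D \<and> AT_orientation D \<and>
   (\<forall>v \<in> verts (splus (cycle_graph n) (path_graph m)). outdeg D v < 3)" by (rule upper)
next
  fix y assume "\<exists>D. is_orientation (splus (cycle_graph n) (path_graph m)) D \<and> AT_orientation D \<and>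
   (\<forall>v \<in> verts (splus (cycle_graph n) (path_graph m)). outdeg D v < y)"
  then obtain D where D: "is_orientation (splus (cycle_graph n) (path_graph m)) D"
    "\<forall>v \<in> verts (splus (cycle_graph n) (path_graph m)). outdeg D v < y" by blast
  show "3 \<le> y"
  proof (rule ccontr)
    assume "\<not> 3 \<le> y"
    then have "y < 3" by simp
    then show False using lower[OF assms D] by blast
  qed
qed

end
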